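(* Let $X$ be an FK-space containing $\phi$ and let $(Y^n)_{n\ge1}$ be FK-spaces such that each $Y^n$ is deferred Ces\`{a}ro conull with respect to $X$. Then $\bigcap_n Y^n$ (with its intersection FK-topology) is deferred Ces\`{a}ro conull with respect to $X$.
   Context: An FK-space is a vector subspace of the space $w$ of all complex sequences with a complete metrizable locally convex topology in which all coordinate functionals are continuous; $X'$ is the continuous dual. The intersection $\bigcap_n Y^n$ of FK-spaces is an FK-space with the topology generated by all seminorms of all $Y^n$ (paranorm $\sum_n \rho_n/(2^n(1+\rho_n))$). $\delta^j$ is the sequence with $1$ in position $j$, $0$ elsewhere; $\phi=\operatorname{span}\{\delta^j\}$. Fix nonnegative integer sequences $p(n)<q(n)$ with $q(n)\to\infty$. For $x\in w$ let $x^{(k)}=\sum_{j=1}^k x_j\delta^j$ and $T_n(x)=\frac{1}{q(n)-p(n)}\sum_{k=p(n)+1}^{q(n)}x^{(k)}$. For an FK-space $X\supseteq\phi$: $D_p^qW(X)=\{x\in X : f(T_n(x))\to f(x)\ \forall f\in X'\}$; $D_p^qB(X)=\{x\in X : \sup_n|f(T_n(x))|<\infty\ \forall f\in X'\}$. For FK-spaces $X\subseteq Y$ with $D_p^qW(X)\neq D_p^qB(X)$, $Y$ is called deferred Ces\`{a}ro conull with respect to $X$ if $D_p^qB(X)\subseteq D_p^qW(Y)$. *)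

theory Defs
  imports "HOL-Analysis.Analysis" "HOL-Library.Nat_Bijection"
begin

text \<open>Sequences in w are functions nat => complex (coordinates indexed from 0).
  A locally convex metrizable topology on a subspace X of w is given by a countable
  family of seminorms rho :: nat => (nat => complex) => real on X.\<close>

definition seq_add :: "(nat \<Rightarrow> complex) \<Rightarrow> (nat \<Rightarrow> complex) \<Rightarrow> nat \<Rightarrow> complex"
  where "seq_add x y = (\<lambda>j. x j + y j)"

definition seq_diff :: "(nat \<Rightarrow> complex) \<Rightarrow> (nat \<Rightarrow> complex) \<Rightarrow> nat \<Rightarrow> complex"
  where "seq_diff x y = (\<lambda>j. x j - y j)"

definition seq_scale :: "complex \<Rightarrow> (nat \<Rightarrow> complex) \<Rightarrow> nat \<Rightarrow> complex"
  where "seq_scale c x = (\<lambda>j. c * x j)"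

definition is_subspace_w :: "(nat \<Rightarrow> complex) set \<Rightarrow> bool" where
  "is_subspace_w X \<longleftrightarrow> (\<lambda>j. 0) \<in> X \<and> (\<forall>x\<in>X. \<forall>y\<in>X. seq_add x y \<in> X)
      \<and> (\<forall>c. \<forall>x\<in>X. seq_scale c x \<in> X)"

definition is_seminorm_on :: "(nat \<Rightarrow> complex) set \<Rightarrow> ((nat \<Rightarrow> complex) \<Rightarrow> real) \<Rightarrow> bool" where
  "is_seminorm_on X r \<longleftrightarrow> (\<forall>x\<in>X. 0 \<le> r x)
      \<and> (\<forall>x\<in>X. \<forall>y\<in>X. r (seq_add x y) \<le> r x + r y)
      \<and> (\<forall>c. \<forall>x\<in>X. r (seq_scale c x) = cmod c * r x)"

definition FK_top :: "(nat \<Rightarrow> complex) set \<Rightarrow> (nat \<Rightarrow> (nat \<Rightarrow> complex) \<Rightarrow> real)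
    \<Rightarrow> (nat \<Rightarrow> complex) topology" where
  "FK_top X \<rho> = topology_generated_by
     {{y \<in> X. \<rho> k (seq_diff y x) < e} | k x e. x \<in> X \<and> e > 0}"

definition is_FK :: "(nat \<Rightarrow> complex) set \<Rightarrow> (nat \<Rightarrow> (nat \<Rightarrow> complex) \<Rightarrow> real) \<Rightarrow> bool" where
  "is_FK X \<rho> \<longleftrightarrow> is_subspace_w X
     \<and> (\<forall>k. is_seminorm_on X (\<rho> k))
     \<and> (\<forall>x\<in>X. (\<forall>k. \<rho> k x = 0) \<longrightarrow> x = (\<lambda>j. 0))
     \<and> (\<forall>s. (\<forall>n. s n \<in> X) \<and> (\<forall>k. \<forall>e>0. \<exists>N. \<forall>m\<ge>N. \<forall>n\<ge>N. \<rho> k (seq_diff (s m) (s n)) < e)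
            \<longrightarrow> (\<exists>x\<in>X. \<forall>k. (\<lambda>n. \<rho> k (seq_diff (s n) x)) \<longlonglongrightarrow> 0))
     \<and> (\<forall>j. continuous_map (FK_top X \<rho>) euclidean (\<lambda>x. x j))"

definition FK_dual :: "(nat \<Rightarrow> complex) set \<Rightarrow> (nat \<Rightarrow> (nat \<Rightarrow> complex) \<Rightarrow> real)
    \<Rightarrow> ((nat \<Rightarrow> complex) \<Rightarrow> complex) set" where
  "FK_dual X \<rho> = {f. (\<forall>x\<in>X. \<forall>y\<in>X. f (seq_add x y) = f x + f y)
      \<and> (\<forall>c. \<forall>x\<in>X. f (seq_scale c x) = c * f x)
      \<and> continuous_map (FK_top X \<rho>) euclidean f}"

definition delta :: "nat \<Rightarrow> nat \<Rightarrow> complex" where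
  "delta j = (\<lambda>i. if i = j then 1 else 0)"

text \<open>phi = span of the unit sequences = finitely supported sequences.\<close>
definition phi :: "(nat \<Rightarrow> complex) set" where
  "phi = {x. finite {j. x j \<noteq> 0}}"

text \<open>k-th section x^(k): keeps the first k coordinates (0-based: indices j < k).\<close>
definition sect :: "(nat \<Rightarrow> complex) \<Rightarrow> nat \<Rightarrow> nat \<Rightarrow> complex" where
  "sect x k = (\<lambda>j. if j < k then x j else 0)"

definition Tdc :: "(nat \<Rightarrow> nat) \<Rightarrow> (nat \<Rightarrow> nat) \<Rightarrow> nat \<Rightarrow> (nat \<Rightarrow> complex) \<Rightarrow> nat \<Rightarrow> complex" where
  "Tdc p q n x = (\<lambda>j. (1 / of_nat (q n - p n)) * (\<Sum>k\<in>{p n<..q n}. sect x k j))"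

definition DW :: "(nat \<Rightarrow> nat) \<Rightarrow> (nat \<Rightarrow> nat) \<Rightarrow> (nat \<Rightarrow> complex) set
    \<Rightarrow> (nat \<Rightarrow> (nat \<Rightarrow> complex) \<Rightarrow> real) \<Rightarrow> (nat \<Rightarrow> complex) set" where
  "DW p q X \<rho> = {x \<in> X. \<forall>f \<in> FK_dual X \<rho>. (\<lambda>n. f (Tdc p q n x)) \<longlonglongrightarrow> f x}"

definition DB :: "(nat \<Rightarrow> nat) \<Rightarrow> (nat \<Rightarrow> nat) \<Rightarrow> (nat \<Rightarrow> complex) set
    \<Rightarrow> (nat \<Rightarrow> (nat \<Rightarrow> complex) \<Rightarrow> real) \<Rightarrow> (nat \<Rightarrow> complex) set" where
  "DB p q X \<rho> = {x \<in> X. \<forall>f \<in> FK_dual X \<rho>. Bseq (\<lambda>n. f (Tdc p q n x))}"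

definition dc_conull :: "(nat \<Rightarrow> nat) \<Rightarrow> (nat \<Rightarrow> nat) \<Rightarrow> (nat \<Rightarrow> complex) set
    \<Rightarrow> (nat \<Rightarrow> (nat \<Rightarrow> complex) \<Rightarrow> real) \<Rightarrow> (nat \<Rightarrow> complex) set
    \<Rightarrow> (nat \<Rightarrow> (nat \<Rightarrow> complex) \<Rightarrow> real) \<Rightarrow> bool" where
  "dc_conull p q X \<rho>X Y \<rho>Y \<longleftrightarrow> is_FK X \<rho>X \<and> is_FK Y \<rho>Y \<and> X \<subseteq> Y
     \<and> DW p q X \<rho>X \<noteq> DB p q X \<rho>X \<and> DB p q X \<rho>X \<subseteq> DW p q Y \<rho>Y"

text \<open>Seminorm family of the intersection: all seminorms of all Y^n, enumerated via prod_decode.\<close>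
definition inter_seminorms :: "(nat \<Rightarrow> nat \<Rightarrow> (nat \<Rightarrow> complex) \<Rightarrow> real)
    \<Rightarrow> nat \<Rightarrow> (nat \<Rightarrow> complex) \<Rightarrow> real" where
  "inter_seminorms \<rho>s m = \<rho>s (fst (prod_decode m)) (snd (prod_decode m))"

end

theory Submission
  imports Defs "HOL-Library.Function_Algebras"
begin

definition rsub :: "'a::real_vector set \<Rightarrow> bool" where
 "rsub S \<longleftrightarrow> 0 \<in> S \<and> (\<forall>x\<in>S. \<forall>y\<in>S. x + y \<in> S) \<and> (\<forall>c. \<forall>x\<in>S. c *\<^sub>R x \<in> S)"

definition rlin :: "'a::real_vector set \<Rightarrow> ('a \<Rightarrow> real) \<Rightarrow> bool" where
 "rlin S h \<longleftrightarrow> (\<forall>x\<in>S. \<forall>y\<in>S. h (x+y) = h x + h y) \<and> (\<forall>c. \<forall>x\<in>S. h (c *\<^sub>R x) = c * h x)"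

definition sublin :: "'a::real_vector set \<Rightarrow> ('a \<Rightarrow> real) \<Rightarrow> bool" where
 "sublin E p \<longleftrightarrow> (\<forall>x\<in>E. \<forall>y\<in>E. p (x+y) \<le> p x + p y) \<and> (\<forall>c\<ge>0. \<forall>x\<in>E. p (c *\<^sub>R x) = c * p x)"

lemma rsub_diff: "rsub S \<Longrightarrow> x \<in> S \<Longrightarrow> y \<in> S \<Longrightarrow> x - y \<in> S"
proof -
  assume a: "rsub S" "x \<in> S" "y \<in> S"
  then have "(-1) *\<^sub>R y \<in> S" unfolding rsub_def by blast
  then have "x + (-1) *\<^sub>R y \<in> S" using a unfolding rsub_def by blast
  then show ?thesis by simp
qed

lemma rsub_add: "rsub S \<Longrightarrow> x \<in> S \<Longrightarrow> y \<in> S \<Longrightarrow> x + y \<in> S"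
  by (simp add: rsub_def)
lemma rsub_scale: "rsub S \<Longrightarrow> x \<in> S \<Longrightarrow> c *\<^sub>R x \<in> S"
  by (simp add: rsub_def)
lemma rsub_zero: "rsub S \<Longrightarrow> 0 \<in> S"
  by (simp add: rsub_def)

lemma rlin_zero: "rlin S h \<Longrightarrow> 0 \<in> S \<Longrightarrow> h 0 = 0"
  unfolding rlin_def by (metis mult_zero_left scaleR_zero_left)

lemma hb_step:
  fixes x0 :: "'a::real_vector"
  assumes D: "rsub D" and DE: "D \<subseteq> E" and E: "rsub E" and x0E: "x0 \<in> E" and x0D: "x0 \<notin> D"
    and h: "rlin D h" and hp: "\<forall>x\<in>D. h x \<le> p x" and p: "sublin E p"
  obtains D' h' where "rsub D'" "D \<subseteq> D'" "D' \<subseteq> E" "x0 \<in> D'" "rlin D' h'"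
     "\<forall>x\<in>D. h' x = h x" "\<forall>x\<in>D'. h' x \<le> p x"
proof -
  have hadd: "\<And>x y. x \<in> D \<Longrightarrow> y \<in> D \<Longrightarrow> h (x + y) = h x + h y" using h by (simp add: rlin_def)
  have hsc: "\<And>c x. x \<in> D \<Longrightarrow> h (c *\<^sub>R x) = c * h x" using h by (simp add: rlin_def)
  have padd: "\<And>x y. x \<in> E \<Longrightarrow> y \<in> E \<Longrightarrow> p (x + y) \<le> p x + p y" using p by (simp add: sublin_def)
  have psc: "\<And>c x. c \<ge> 0 \<Longrightarrow> x \<in> E \<Longrightarrow> p (c *\<^sub>R x) = c * p x" using p by (simp add: sublin_def)
  have key: "h y - p (y - x0) \<le> p (z + x0) - h z" if "y \<in> D" "z \<in> D" for y z
  proof -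
    have m1: "y - x0 \<in> E" using rsub_diff[OF E, of y x0] that DE x0E by blast
    have m2: "z + x0 \<in> E" using rsub_add[OF E, of z x0] that DE x0E by blast
    have "h y + h z = h (y + z)" using hadd that by simp
    also have "\<dots> \<le> p (y + z)" using hp that rsub_add[OF D] by blast
    also have "y + z = (y - x0) + (z + x0)" by simp
    also have "p \<dots> \<le> p (y - x0) + p (z + x0)"
      using padd[OF m1 m2] .
    finally show ?thesis by simp
  qed
  define c where "c = (SUP y\<in>D. h y - p (y - x0))"
  have D0: "0 \<in> D" using D by (simp add: rsub_def)
  have bdd: "bdd_above ((\<lambda>y. h y - p (y - x0)) ` D)"
    using key[OF _ D0] by (intro bdd_aboveI2) 
  have c1: "h y - p (y - x0) \<le> c" if "y \<in> D" for y
    unfolding c_def using bdd that by (rule cSUP_upper2) simp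
  have c2: "c \<le> p (z + x0) - h z" if "z \<in> D" for z
    unfolding c_def using D0 key[OF _ that] by (intro cSUP_least) auto
  have uniq: "t = t'" if "y \<in> D" "y' \<in> D" "y + t *\<^sub>R x0 = y' + t' *\<^sub>R x0" for y y' t t'
  proof (rule ccontr)
    assume ne: "t \<noteq> t'"
    have "(t - t') *\<^sub>R x0 = y' - y" using that(3) by (simp add: algebra_simps)
    moreover have "(1 / (t - t')) *\<^sub>R ((t - t') *\<^sub>R x0) = x0" using ne by simp
    ultimately have "x0 = (1 / (t - t')) *\<^sub>R (y' - y)" by simp
    then have "x0 \<in> D" using rsub_scale[OF D] rsub_diff[OF D] that by simp
    then show False using x0D by simp
  qed
  define D' where "D' = {y + t *\<^sub>R x0 | y t. y \<in> D}"
  define h' where "h' v = (SOME r. \<exists>y t. y \<in> D \<and> v = y + t *\<^sub>R x0 \<and> r = h y + t * c)" for v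
  have h'eq: "h' (y + t *\<^sub>R x0) = h y + t * c" if "y \<in> D" for y t
  proof -
    have "\<exists>r. \<exists>y' t'. y' \<in> D \<and> y + t *\<^sub>R x0 = y' + t' *\<^sub>R x0 \<and> r = h y' + t' * c"
      using that by blast
    then have "\<exists>y' t'. y' \<in> D \<and> y + t *\<^sub>R x0 = y' + t' *\<^sub>R x0 \<and> h' (y + t *\<^sub>R x0) = h y' + t' * c"
      unfolding h'_def by (rule someI_ex)
    then obtain y' t' where "y' \<in> D" "y + t *\<^sub>R x0 = y' + t' *\<^sub>R x0" "h' (y + t *\<^sub>R x0) = h y' + t' * c"
      by blast
    moreover have "t = t'" using uniq that \<open>y' \<in> D\<close> calculation(2) by blast
    moreover have "y = y'" using calculation by simp
    ultimately show ?thesis by simp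
  qed
  have "rsub D'"
    unfolding rsub_def D'_def
  proof (intro conjI ballI allI)
    show "0 \<in> {y + t *\<^sub>R x0 |y t. y \<in> D}" using D0 by (intro CollectI exI[of _ 0]) auto
  next
    fix u v assume "u \<in> {y + t *\<^sub>R x0 |y t. y \<in> D}" "v \<in> {y + t *\<^sub>R x0 |y t. y \<in> D}"
    then obtain y t y' t' where "y \<in> D" "y' \<in> D" "u = y + t *\<^sub>R x0" "v = y' + t' *\<^sub>R x0" by blast
    then show "u + v \<in> {y + t *\<^sub>R x0 |y t. y \<in> D}"
      using rsub_add[OF D] by (intro CollectI exI[of _ "y + y'"] exI[of _ "t + t'"]) (auto simp: algebra_simps)
  next
    fix a u assume "u \<in> {y + t *\<^sub>R x0 |y t. y \<in> D}"
    then obtain y t where "y \<in> D" "u = y + t *\<^sub>R x0" by blast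
    then show "a *\<^sub>R u \<in> {y + t *\<^sub>R x0 |y t. y \<in> D}"
      using rsub_scale[OF D] by (intro CollectI exI[of _ "a *\<^sub>R y"] exI[of _ "a * t"]) (auto simp: algebra_simps)
  qed
  moreover have "D \<subseteq> D'" unfolding D'_def by (auto intro!: exI[of _ "0::real"])
  moreover have "D' \<subseteq> E" unfolding D'_def using DE x0E rsub_add[OF E] rsub_scale[OF E] by blast
  moreover have "x0 \<in> D'"
  proof -
    have "x0 = 0 + (1::real) *\<^sub>R x0" by simp
    then show ?thesis unfolding D'_def using D0 by blast
  qed
  moreover have "rlin D' h'"
    unfolding rlin_def
  proof (intro conjI ballI allI)
    fix u v assume "u \<in> D'" "v \<in> D'"
    then obtain y t y' t' where yy: "y \<in> D" "y' \<in> D" "u = y + t *\<^sub>R x0" "v = y' + t' *\<^sub>R x0"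
      unfolding D'_def by blast
    have "u + v = (y + y') + (t + t') *\<^sub>R x0" using yy by (simp add: algebra_simps)
    then have "h' (u + v) = h' ((y + y') + (t + t') *\<^sub>R x0)" by (rule arg_cong)
    also have "\<dots> = h (y + y') + (t + t') * c" by (rule h'eq, rule rsub_add[OF D yy(1,2)])
    also have "\<dots> = (h y + t * c) + (h y' + t' * c)" using hadd yy by (simp add: algebra_simps)
    finally show "h' (u + v) = h' u + h' v" using yy h'eq by simp
  next
    fix a u assume "u \<in> D'"
    then obtain y t where yy: "y \<in> D" "u = y + t *\<^sub>R x0" unfolding D'_def by blast
    have "a *\<^sub>R u = a *\<^sub>R y + (a * t) *\<^sub>R x0" using yy by (simp add: algebra_simps)
    then have "h' (a *\<^sub>R u) = h' (a *\<^sub>R y + (a * t) *\<^sub>R x0)" by (rule arg_cong)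
    also have "\<dots> = h (a *\<^sub>R y) + (a * t) * c" by (rule h'eq, rule rsub_scale[OF D yy(1)])
    also have "\<dots> = a * (h y + t * c)" using hsc yy by (simp add: algebra_simps)
    finally show "h' (a *\<^sub>R u) = a * h' u" using yy h'eq by simp
  qed
  moreover have "\<forall>x\<in>D. h' x = h x" using h'eq[of _ 0] by simp
  moreover have "\<forall>x\<in>D'. h' x \<le> p x"
  proof
    fix u assume "u \<in> D'"
    then obtain y t where yy: "y \<in> D" "u = y + t *\<^sub>R x0" unfolding D'_def by blast
    have yE: "y \<in> E" using yy DE by blast
    have "h y + t * c \<le> p (y + t *\<^sub>R x0)"
    proof (cases "t = 0")
      case True then show ?thesis using hp yy by simp
    next
      case False
      show ?thesis
      proof (cases "t > 0")
        case True
        have z: "(1/t) *\<^sub>R y \<in> D" using rsub_scale[OF D] yy by blast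
        have "c \<le> p ((1/t) *\<^sub>R y + x0) - h ((1/t) *\<^sub>R y)" using c2[OF z] .
        also have "(1/t) *\<^sub>R y + x0 = (1/t) *\<^sub>R (y + t *\<^sub>R x0)" using True by (simp add: algebra_simps)
        also have "p \<dots> = (1/t) * p (y + t *\<^sub>R x0)"
          using psc True rsub_add[OF E] rsub_scale[OF E] yE x0E by simp
        finally have "c \<le> (1/t) * p (y + t *\<^sub>R x0) - (1/t) * h y" using hsc yy by simp
        then have "t * c \<le> t * ((1/t) * p (y + t *\<^sub>R x0) - (1/t) * h y)"
          using True by (simp add: mult_left_mono)
        then show ?thesis using True by (simp add: algebra_simps)
      next
        case False
        define s where "s = - t"
        have s: "s > 0" using False \<open>t \<noteq> 0\<close> s_def by simp
        have z: "(1/s) *\<^sub>R y \<in> D" using rsub_scale[OF D] yy by blast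
        have "h ((1/s) *\<^sub>R y) - p ((1/s) *\<^sub>R y - x0) \<le> c" using c1[OF z] .
        also have "(1/s) *\<^sub>R y - x0 = (1/s) *\<^sub>R (y + t *\<^sub>R x0)" using s s_def by (simp add: algebra_simps)
        also have "p \<dots> = (1/s) * p (y + t *\<^sub>R x0)"
          using psc s rsub_add[OF E] rsub_scale[OF E] yE x0E by simp
        finally have "(1/s) * h y - (1/s) * p (y + t *\<^sub>R x0) \<le> c" using hsc yy by simp
        then have "s * ((1/s) * h y - (1/s) * p (y + t *\<^sub>R x0)) \<le> s * c"
          using s by (simp add: mult_left_mono)
        then show ?thesis using s s_def by (simp add: algebra_simps)
      qed
    qed
    then show "h' u \<le> p u" using yy h'eq by simp
  qed
  ultimately show ?thesis using that by blast
qed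

lemma real_hb:
  fixes f p :: "'a::real_vector \<Rightarrow> real"
  assumes E: "rsub E" and S: "rsub S" and SE: "S \<subseteq> E" and f: "rlin S f"
    and fp: "\<forall>x\<in>S. f x \<le> p x" and p: "sublin E p"
  shows "\<exists>F. rlin E F \<and> (\<forall>x\<in>S. F x = f x) \<and> (\<forall>x\<in>E. F x \<le> p x)"
proof -
  define P where "P D h \<longleftrightarrow> rsub D \<and> S \<subseteq> D \<and> D \<subseteq> E \<and> rlin D h \<and> (\<forall>x\<in>S. h x = f x) \<and> (\<forall>x\<in>D. h x \<le> p x)"
    for D and h :: "'a \<Rightarrow> real"
  define A where "A = {G. \<exists>D h. G = (\<lambda>x. (x, h x)) ` D \<and> P D h}"
  have memA: "\<And>G. G \<in> A \<Longrightarrow> \<exists>D h. G = (\<lambda>x. (x, h x)) ` D \<and> P D h" unfolding A_def by blast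
  have "\<forall>C\<in>chains A. \<exists>U\<in>A. \<forall>X\<in>C. X \<subseteq> U"
  proof
    fix C assume C: "C \<in> chains A"
    have CA: "C \<subseteq> A" using C by (simp add: chains_def)
    have ch: "\<And>G1 G2. G1 \<in> C \<Longrightarrow> G2 \<in> C \<Longrightarrow> G1 \<subseteq> G2 \<or> G2 \<subseteq> G1"
      using C by (auto simp: chains_def chain_subset_def)
    show "\<exists>U\<in>A. \<forall>X\<in>C. X \<subseteq> U"
    proof (cases "C = {}")
      case True
      have "(\<lambda>x. (x, f x)) ` S \<in> A" unfolding A_def P_def using S SE f fp by blast
      then show ?thesis using True by blast
    next
      case False
      define U where "U = \<Union>C"
      define DU where "DU = fst ` U"
      define hU where "hU x = (SOME y. (x, y) \<in> U)" for x
      have func: "y1 = y2" if a: "(x, y1) \<in> U" "(x, y2) \<in> U" for x y1 y2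
      proof -
        obtain G1 G2 where G: "G1 \<in> C" "G2 \<in> C" "(x, y1) \<in> G1" "(x, y2) \<in> G2"
          using a U_def by blast
        then have "\<exists>G\<in>C. (x, y1) \<in> G \<and> (x, y2) \<in> G" using ch[OF G(1,2)] by blast
        then obtain G where "G \<in> C" "(x, y1) \<in> G" "(x, y2) \<in> G" by blast
        then obtain D h where "G = (\<lambda>x. (x, h x)) ` D" using CA memA by blast
        then show ?thesis using \<open>(x, y1) \<in> G\<close> \<open>(x, y2) \<in> G\<close> by auto
      qed
      have inU: "(x, hU x) \<in> U" if a: "x \<in> DU" for x
      proof -
        obtain y where "(x, y) \<in> U" using a DU_def by force
        then show ?thesis unfolding hU_def by (rule someI)
      qed
      have getG: "\<exists>D h. (\<lambda>x. (x, h x)) ` D \<in> C \<and> P D h \<and> (\<forall>x\<in>F. x \<in> D \<and> hU x = h x)"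
        if "finite F" "F \<noteq> {}" "F \<subseteq> DU" for F
        using that
      proof (induction F rule: finite_ne_induct)
        case (singleton x)
        then have "(x, hU x) \<in> U" using inU by blast
        then obtain G where G: "G \<in> C" "(x, hU x) \<in> G" unfolding U_def by blast
        then obtain D h where Dh: "G = (\<lambda>x. (x, h x)) ` D" "P D h" using CA memA by blast
        then show ?case using G by blast
      next
        case (insert x F)
        then obtain D h where Dh: "(\<lambda>x. (x, h x)) ` D \<in> C" "P D h" "\<forall>x\<in>F. x \<in> D \<and> hU x = h x"
          by blast
        have "(x, hU x) \<in> U" using inU insert by blast
        then obtain G where G: "G \<in> C" "(x, hU x) \<in> G" unfolding U_def by blast
        then obtain D' h' where Dh': "G = (\<lambda>x. (x, h' x)) ` D'" "P D' h'" using CA memA by blast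
        have xD': "x \<in> D' \<and> hU x = h' x" using G Dh' by auto
        show ?case
        proof (cases "(\<lambda>x. (x, h x)) ` D \<subseteq> G")
          case True
          have "\<forall>y\<in>F. y \<in> D' \<and> hU y = h' y"
          proof
            fix y assume "y \<in> F"
            then have "(y, h y) \<in> G" "hU y = h y" "y \<in> D" using Dh True by auto
            then show "y \<in> D' \<and> hU y = h' y" using Dh' by auto
          qed
          then show ?thesis using xD' Dh' G by blast
        next
          case False
          then have "G \<subseteq> (\<lambda>x. (x, h x)) ` D" using ch[OF G(1) Dh(1)] by blast
          then have "(x, hU x) \<in> (\<lambda>x. (x, h x)) ` D" using G by blast
          then have "x \<in> D \<and> hU x = h x" by auto
          then show ?thesis using Dh by blast
        qed
      qed
      have PU: "P DU hU"
        unfolding P_def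
      proof (intro conjI)
        obtain G0 where G0: "G0 \<in> C" using False by blast
        then obtain D0 h0 where D0: "G0 = (\<lambda>x. (x, h0 x)) ` D0" "P D0 h0" using CA memA by blast
        have sub: "D0 \<subseteq> DU" using G0 D0 unfolding DU_def U_def by force
        show "rsub DU" unfolding rsub_def
        proof (intro conjI ballI allI)
          show "0 \<in> DU" using sub D0 by (auto simp: P_def rsub_def)
        next
          fix x y assume "x \<in> DU" "y \<in> DU"
          then obtain D h where Dh: "(\<lambda>x. (x, h x)) ` D \<in> C" "P D h" "x \<in> D" "y \<in> D"
            using getG[of "{x, y}"] by auto
          then have "x + y \<in> D" by (auto simp: P_def rsub_def)
          then show "x + y \<in> DU" using Dh(1) unfolding DU_def U_def by force
        next
          fix c x assume "x \<in> DU"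
          then obtain D h where Dh: "(\<lambda>x. (x, h x)) ` D \<in> C" "P D h" "x \<in> D"
            using getG[of "{x}"] by auto
          then have "c *\<^sub>R x \<in> D" by (auto simp: P_def rsub_def)
          then show "c *\<^sub>R x \<in> DU" using Dh(1) unfolding DU_def U_def by force
        qed
        show "S \<subseteq> DU" using sub D0 by (auto simp: P_def)
        show "DU \<subseteq> E"
        proof
          fix x assume "x \<in> DU"
          then obtain D h where Dh: "(\<lambda>x. (x, h x)) ` D \<in> C" "P D h" "x \<in> D"
            using getG[of "{x}"] by auto
          then show "x \<in> E" by (auto simp: P_def)
        qed
        show "rlin DU hU" unfolding rlin_def
        proof (intro conjI ballI allI)
          fix x y assume "x \<in> DU" "y \<in> DU"
          then obtain D h where Dh: "(\<lambda>x. (x, h x)) ` D \<in> C" "P D h" "x \<in> D" "y \<in> D"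
            "hU x = h x" "hU y = h y"
            using getG[of "{x, y}"] by auto
          then have xy: "x + y \<in> D" "h (x + y) = h x + h y" by (auto simp: P_def rsub_def rlin_def)
          have "(x + y, h (x + y)) \<in> U" using Dh(1) xy unfolding U_def by blast
          moreover have "x + y \<in> DU" using Dh(1) xy unfolding DU_def U_def by force
          ultimately have "hU (x + y) = h (x + y)" using func inU by blast
          then show "hU (x + y) = hU x + hU y" using xy Dh by simp
        next
          fix c x assume "x \<in> DU"
          then obtain D h where Dh: "(\<lambda>x. (x, h x)) ` D \<in> C" "P D h" "x \<in> D" "hU x = h x"
            using getG[of "{x}"] by auto
          then have xy: "c *\<^sub>R x \<in> D" "h (c *\<^sub>R x) = c * h x" by (auto simp: P_def rsub_def rlin_def)
          have "(c *\<^sub>R x, h (c *\<^sub>R x)) \<in> U" using Dh(1) xy unfolding U_def by blast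
          moreover have "c *\<^sub>R x \<in> DU" using Dh(1) xy unfolding DU_def U_def by force
          ultimately have "hU (c *\<^sub>R x) = h (c *\<^sub>R x)" using func inU by blast
          then show "hU (c *\<^sub>R x) = c * hU x" using xy Dh by simp
        qed
        show "\<forall>x\<in>S. hU x = f x"
        proof
          fix x assume "x \<in> S"
          then have "x \<in> DU" using sub D0 by (auto simp: P_def)
          then obtain D h where Dh: "(\<lambda>x. (x, h x)) ` D \<in> C" "P D h" "hU x = h x"
            using getG[of "{x}"] by auto
          then show "hU x = f x" using \<open>x \<in> S\<close> by (auto simp: P_def)
        qed
        show "\<forall>x\<in>DU. hU x \<le> p x"
        proof
          fix x assume "x \<in> DU"
          then obtain D h where Dh: "(\<lambda>x. (x, h x)) ` D \<in> C" "P D h" "x \<in> D" "hU x = h x"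
            using getG[of "{x}"] by auto
          then show "hU x \<le> p x" by (auto simp: P_def)
        qed
      qed
      have "U = (\<lambda>x. (x, hU x)) ` DU"
      proof
        show "U \<subseteq> (\<lambda>x. (x, hU x)) ` DU"
        proof
          fix z assume z: "z \<in> U"
          obtain x y where "z = (x, y)" by fastforce
          then have "x \<in> DU" using z DU_def by force
          then have "y = hU x" using func inU z \<open>z = (x, y)\<close> by blast
          then show "z \<in> (\<lambda>x. (x, hU x)) ` DU" using \<open>x \<in> DU\<close> \<open>z = (x, y)\<close> by blast
        qed
        show "(\<lambda>x. (x, hU x)) ` DU \<subseteq> U" using inU by blast
      qed
      then have "U \<in> A" using PU unfolding A_def by blast
      then show ?thesis unfolding U_def by blast
    qed
  qed
  from Zorn_Lemma2[OF this] obtain M where M: "M \<in> A" "\<forall>X\<in>A. M \<subseteq> X \<longrightarrow> X = M" by blast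
  then obtain D h where Dh: "M = (\<lambda>x. (x, h x)) ` D" "P D h" using memA by blast
  have "D = E"
  proof (rule ccontr)
    assume "D \<noteq> E"
    then obtain x0 where x0: "x0 \<in> E" "x0 \<notin> D" using Dh(2) by (auto simp: P_def)
    obtain D' h' where D': "rsub D'" "D \<subseteq> D'" "D' \<subseteq> E" "x0 \<in> D'" "rlin D' h'"
       "\<forall>x\<in>D. h' x = h x" "\<forall>x\<in>D'. h' x \<le> p x"
      using hb_step[of D E x0 h p] Dh(2) E x0 p unfolding P_def by blast
    have "P D' h'" unfolding P_def using D' Dh(2) unfolding P_def by auto
    then have "(\<lambda>x. (x, h' x)) ` D' \<in> A" unfolding A_def by blast
    moreover have "M \<subseteq> (\<lambda>x. (x, h' x)) ` D'" using Dh(1) D'(2,6) by force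
    ultimately have "(\<lambda>x. (x, h' x)) ` D' = M" using M by blast
    then have "(x0, h' x0) \<in> M" using D'(4) by blast
    then show False using Dh(1) x0 by auto
  qed
  then show ?thesis using Dh(2) unfolding P_def by blast
qed

instantiation "fun" :: (type, real_vector) real_vector
begin
definition scaleR_fun :: "real \<Rightarrow> ('a \<Rightarrow> 'b) \<Rightarrow> 'a \<Rightarrow> 'b" where
  "scaleR_fun r f = (\<lambda>x. r *\<^sub>R f x)"
instance
  by standard (auto simp: scaleR_fun_def fun_eq_iff algebra_simps)
end

lemma scaleR_fun_apply [simp]: "(r *\<^sub>R f) x = r *\<^sub>R f x"
  by (simp add: scaleR_fun_def)

type_synonym vv = "nat \<Rightarrow> nat \<Rightarrow> complex"

definition cmul :: "complex \<Rightarrow> vv \<Rightarrow> vv" where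
  "cmul c v = (\<lambda>n j. c * v n j)"

lemma scaleR_cmul: "r *\<^sub>R (v::vv) = cmul (of_real r) v"
  by (simp add: cmul_def fun_eq_iff scaleR_conv_of_real)

lemma cmul_decomp: "cmul c v = Re c *\<^sub>R v + Im c *\<^sub>R cmul \<i> v"
  by (simp add: cmul_def fun_eq_iff scaleR_conv_of_real complex_eq_iff)

lemma cmul_cmul: "cmul a (cmul b v) = cmul (a * b) v"
  by (simp add: cmul_def fun_eq_iff)

lemma cmul_add: "cmul c (v + w) = cmul c v + cmul c w"
  by (simp add: cmul_def fun_eq_iff algebra_simps)

lemma complex_hb:
  fixes f :: "vv \<Rightarrow> complex" and p :: "vv \<Rightarrow> real"
  assumes E: "rsub E" and S: "rsub S" and SE: "S \<subseteq> E"
    and Ec: "\<forall>c. \<forall>x\<in>E. cmul c x \<in> E" and Sc: "\<forall>c. \<forall>x\<in>S. cmul c x \<in> S"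
    and fadd: "\<forall>x\<in>S. \<forall>y\<in>S. f (x + y) = f x + f y"
    and fsc: "\<forall>c. \<forall>x\<in>S. f (cmul c x) = c * f x"
    and p: "sublin E p" and pc: "\<forall>c. \<forall>x\<in>E. p (cmul c x) = cmod c * p x"
    and fp: "\<forall>x\<in>S. cmod (f x) \<le> p x"
  shows "\<exists>F. (\<forall>x\<in>E. \<forall>y\<in>E. F (x + y) = F x + F y) \<and> (\<forall>c. \<forall>x\<in>E. F (cmul c x) = c * F x)
     \<and> (\<forall>x\<in>S. F x = f x) \<and> (\<forall>x\<in>E. cmod (F x) \<le> p x)"
proof -
  define u where "u x = Re (f x)" for x
  have "rlin S u" unfolding rlin_def u_def
  proof (intro conjI ballI allI)
    fix x y assume "x \<in> S" "y \<in> S" then show "Re (f (x + y)) = Re (f x) + Re (f y)" using fadd by simp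
  next
    fix c x assume "x \<in> S" then show "Re (f (c *\<^sub>R x)) = c * Re (f x)"
      using fsc by (simp add: scaleR_cmul)
  qed
  moreover have "\<forall>x\<in>S. u x \<le> p x" unfolding u_def using fp complex_Re_le_cmod order_trans by blast
  ultimately obtain U where U: "rlin E U" "\<forall>x\<in>S. U x = u x" "\<forall>x\<in>E. U x \<le> p x"
    using real_hb[OF E S SE _ _ p] by blast
  have Uadd: "\<And>x y. x \<in> E \<Longrightarrow> y \<in> E \<Longrightarrow> U (x + y) = U x + U y" using U(1) by (simp add: rlin_def)
  have Usc: "\<And>c x. x \<in> E \<Longrightarrow> U (c *\<^sub>R x) = c * U x" using U(1) by (simp add: rlin_def)
  define F where "F x = Complex (U x) (- U (cmul \<i> x))" for x
  have iE: "\<And>x. x \<in> E \<Longrightarrow> cmul \<i> x \<in> E" using Ec by blast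
  have Fadd: "\<forall>x\<in>E. \<forall>y\<in>E. F (x + y) = F x + F y"
    unfolding F_def using Uadd iE rsub_add[OF E] by (simp add: cmul_add complex_eq_iff)
  have Fsc: "\<forall>c. \<forall>x\<in>E. F (cmul c x) = c * F x"
  proof (intro allI ballI)
    fix c x assume x: "x \<in> E"
    have ix: "cmul \<i> x \<in> E" using iE x .
    have sx: "\<And>r. r *\<^sub>R x \<in> E" "\<And>r. r *\<^sub>R cmul \<i> x \<in> E" using rsub_scale[OF E] x ix by auto
    have a: "U (cmul c x) = Re c * U x + Im c * U (cmul \<i> x)"
      using cmul_decomp[of c x] Uadd[OF sx(1) sx(2)] Usc x ix by simp
    have e: "cmul \<i> (cmul c x) = (- Im c) *\<^sub>R x + Re c *\<^sub>R cmul \<i> x"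
      by (simp add: cmul_def fun_eq_iff scaleR_conv_of_real complex_eq_iff)
    have uu: "U ((- Im c) *\<^sub>R x + Re c *\<^sub>R cmul \<i> x) = (- Im c) * U x + Re c * U (cmul \<i> x)"
    proof -
      have "U ((- Im c) *\<^sub>R x + Re c *\<^sub>R cmul \<i> x) = U ((- Im c) *\<^sub>R x) + U (Re c *\<^sub>R cmul \<i> x)"
        by (rule Uadd[OF sx(1) sx(2)])
      also have "\<dots> = (- Im c) * U x + Re c * U (cmul \<i> x)" by (simp only: Usc[OF x] Usc[OF ix])
      finally show ?thesis .
    qed
    have b: "U (cmul \<i> (cmul c x)) = - Im c * U x + Re c * U (cmul \<i> x)"
      unfolding e by (rule uu)
    show "F (cmul c x) = c * F x" unfolding F_def using a b by (simp add: complex_eq_iff)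
  qed
  have FS: "\<forall>x\<in>S. F x = f x"
  proof
    fix x assume x: "x \<in> S"
    have "cmul \<i> x \<in> S" using Sc x by blast
    then have "U (cmul \<i> x) = Re (\<i> * f x)" using U(2) fsc x unfolding u_def by simp
    then show "F x = f x" unfolding F_def using U(2) x u_def by (simp add: complex_eq_iff)
  qed
  have pnn: "p x \<ge> 0" if x: "x \<in> E" for x
  proof -
    have m: "cmul (-1) x \<in> E" using Ec x by blast
    have "x + cmul (-1) x = cmul 0 x" by (simp add: cmul_def fun_eq_iff)
    then have "p (x + cmul (-1) x) = 0" using pc x by simp
    moreover have "p (x + cmul (-1) x) \<le> p x + p (cmul (-1) x)" using p x m by (simp add: sublin_def)
    moreover have "p (cmul (-1) x) = p x" using pc x by simp
    ultimately show ?thesis by simp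
  qed
  have Fp: "\<forall>x\<in>E. cmod (F x) \<le> p x"
  proof
    fix x assume x: "x \<in> E"
    show "cmod (F x) \<le> p x"
    proof (cases "F x = 0")
      case True then show ?thesis using pnn x by simp
    next
      case False
      define c where "c = cnj (F x) / of_real (cmod (F x))"
      have cm: "cmod c = 1" using False by (simp add: c_def norm_divide)
      have "c * F x = of_real (cmod (F x))"
        using False unfolding c_def by (simp add: complex_norm_square[symmetric] power2_eq_square field_simps mult.commute)
      then have "F (cmul c x) = of_real (cmod (F x))" using Fsc x by simp
      then have "cmod (F x) = U (cmul c x)" unfolding F_def by (simp add: complex_eq_iff)
      also have "\<dots> \<le> p (cmul c x)" using U(3) Ec x by blast
      also have "\<dots> = p x" using pc cm x by simp
      finally show ?thesis .
    qed
  qed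
  show ?thesis using Fadd Fsc FS Fp by blast
qed

locale semis =
  fixes X :: "(nat \<Rightarrow> complex) set" and \<rho> :: "nat \<Rightarrow> (nat \<Rightarrow> complex) \<Rightarrow> real"
  assumes sub: "is_subspace_w X" and semi: "\<And>k. is_seminorm_on X (\<rho> k)"
begin

lemma zero_in: "(\<lambda>j. 0) \<in> X" using sub by (simp add: is_subspace_w_def)
lemma add_in: "x \<in> X \<Longrightarrow> y \<in> X \<Longrightarrow> seq_add x y \<in> X" using sub by (simp add: is_subspace_w_def)
lemma scale_in: "x \<in> X \<Longrightarrow> seq_scale c x \<in> X" using sub by (simp add: is_subspace_w_def)
lemma diff_in: "x \<in> X \<Longrightarrow> y \<in> X \<Longrightarrow> seq_diff x y \<in> X"
proof -
  assume "x \<in> X" "y \<in> X"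
  moreover have "seq_diff x y = seq_add x (seq_scale (-1) y)"
    by (simp add: seq_diff_def seq_add_def seq_scale_def fun_eq_iff)
  ultimately show ?thesis using add_in scale_in by simp
qed
lemma nn: "x \<in> X \<Longrightarrow> 0 \<le> \<rho> k x" using semi[of k] by (simp add: is_seminorm_on_def)
lemma tri: "x \<in> X \<Longrightarrow> y \<in> X \<Longrightarrow> \<rho> k (seq_add x y) \<le> \<rho> k x + \<rho> k y"
  using semi[of k] by (simp add: is_seminorm_on_def)
lemma hom: "x \<in> X \<Longrightarrow> \<rho> k (seq_scale c x) = cmod c * \<rho> k x"
  using semi[of k] by (simp add: is_seminorm_on_def)
lemma rho_self: "y \<in> X \<Longrightarrow> \<rho> k (seq_diff y y) = 0"
proof -
  assume y: "y \<in> X"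
  have "seq_diff y y = seq_scale 0 y" by (simp add: seq_diff_def seq_scale_def fun_eq_iff)
  then show ?thesis using hom[OF y, of k 0] by simp
qed
lemma rho_tri: "x \<in> X \<Longrightarrow> y \<in> X \<Longrightarrow> z \<in> X \<Longrightarrow> \<rho> k (seq_diff z x) \<le> \<rho> k (seq_diff z y) + \<rho> k (seq_diff y x)"
proof -
  assume a: "x \<in> X" "y \<in> X" "z \<in> X"
  have "seq_diff z x = seq_add (seq_diff z y) (seq_diff y x)"
    by (simp add: seq_diff_def seq_add_def fun_eq_iff)
  then show ?thesis using tri diff_in a by simp
qed
lemma rho_zero: "\<rho> k (\<lambda>j. 0) = 0"
proof -
  have "(\<lambda>j. 0::complex) = seq_scale 0 (\<lambda>j. 0)" by (simp add: seq_scale_def)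
  then show ?thesis using hom[OF zero_in, of k 0] by simp
qed

definition ballK where "ballK K y e = {z\<in>X. \<forall>k\<in>K. \<rho> k (seq_diff z y) < e}"

lemma topspace_FK: "topspace (FK_top X \<rho>) = X"
proof -
  have "\<Union>{{y \<in> X. \<rho> k (seq_diff y x) < e} | k x e. x \<in> X \<and> e > 0} = X"
  proof
    show "X \<subseteq> \<Union>{{y \<in> X. \<rho> k (seq_diff y x) < e} | k x e. x \<in> X \<and> e > 0}"
    proof
      fix y assume y: "y \<in> X"
      then have a: "y \<in> {z \<in> X. \<rho> 0 (seq_diff z y) < 1}" using rho_self by simp
      have b: "{z \<in> X. \<rho> 0 (seq_diff z y) < 1} \<in> {{y \<in> X. \<rho> k (seq_diff y x) < e} | k x e. x \<in> X \<and> e > 0}"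
        by (rule CollectI, rule exI[of _ 0], rule exI[of _ y], rule exI[of _ "1::real"]) (simp add: y)
      show "y \<in> \<Union>{{y \<in> X. \<rho> k (seq_diff y x) < e} | k x e. x \<in> X \<and> e > 0}"
        using UnionI[OF b a] .
    qed
  qed auto
  then show ?thesis unfolding FK_top_def by simp
qed

lemma open_ballK: assumes "y \<in> X" "finite K" "e > 0" shows "openin (FK_top X \<rho>) (ballK K y e)"
  using assms(2)
proof (induction K rule: finite_induct)
  case empty
  then show ?case using topspace_FK openin_topspace[of "FK_top X \<rho>"] by (simp add: ballK_def)
next
  case (insert k K)
  have "ballK (insert k K) y e = {z \<in> X. \<rho> k (seq_diff z y) < e} \<inter> ballK K y e"
    by (auto simp: ballK_def)
  moreover have "openin (FK_top X \<rho>) {z \<in> X. \<rho> k (seq_diff z y) < e}"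
    unfolding FK_top_def
    by (rule topology_generated_by_Basis, rule CollectI, rule exI[of _ k], rule exI[of _ y], rule exI[of _ e]) (simp add: assms)
  ultimately show ?case using insert by auto
qed

lemma in_ballK: "y \<in> X \<Longrightarrow> e > 0 \<Longrightarrow> y \<in> ballK K y e"
  by (simp add: ballK_def rho_self)

lemma open_char:
  assumes "openin (FK_top X \<rho>) U" "y \<in> U"
  shows "\<exists>K e. finite K \<and> e > 0 \<and> ballK K y e \<subseteq> U"
proof -
  have "generate_topology_on {{y \<in> X. \<rho> k (seq_diff y x) < e} | k x e. x \<in> X \<and> e > 0} U"
    using assms(1) unfolding FK_top_def by (rule openin_topology_generated_by)
  then show ?thesis using assms(2)
  proof (induction arbitrary: y)
    case Empty then show ?case by simp
  next
    case (Int a b)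
    have ya: "y \<in> a" "y \<in> b" using Int.prems by auto
    obtain K1 e1 where K1: "finite K1" "e1 > 0" "ballK K1 y e1 \<subseteq> a" using Int.IH(1)[OF ya(1)] by blast
    obtain K2 e2 where K2: "finite K2" "e2 > 0" "ballK K2 y e2 \<subseteq> b" using Int.IH(2)[OF ya(2)] by blast
    have s1: "ballK (K1 \<union> K2) y (min e1 e2) \<subseteq> ballK K1 y e1" by (auto simp: ballK_def)
    have s2: "ballK (K1 \<union> K2) y (min e1 e2) \<subseteq> ballK K2 y e2" by (auto simp: ballK_def)
    have "ballK (K1 \<union> K2) y (min e1 e2) \<subseteq> a \<inter> b" using s1 s2 K1(3) K2(3) by blast
    moreover have "finite (K1 \<union> K2)" "min e1 e2 > 0" using K1 K2 by auto
    ultimately show ?case by blast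
  next
    case (UN K)
    obtain k where k: "k \<in> K" "y \<in> k" using UN.prems by blast
    obtain K' e where Ke: "finite K'" "e > 0" "ballK K' y e \<subseteq> k" using UN.IH[OF k] by blast
    then have "ballK K' y e \<subseteq> \<Union>K" using k(1) by blast
    then show ?case using Ke(1,2) by blast
  next
    case (Basis s)
    obtain k x e where s: "s = {y \<in> X. \<rho> k (seq_diff y x) < e}" "x \<in> X" "e > 0" using Basis.hyps by blast
    have yX: "y \<in> X" and ye: "\<rho> k (seq_diff y x) < e" using Basis s by auto
    have "ballK {k} y (e - \<rho> k (seq_diff y x)) \<subseteq> s"
    proof
      fix z assume "z \<in> ballK {k} y (e - \<rho> k (seq_diff y x))"
      then have z: "z \<in> X" "\<rho> k (seq_diff z y) < e - \<rho> k (seq_diff y x)" by (auto simp: ballK_def)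
      then have "\<rho> k (seq_diff z x) < e" using rho_tri[OF s(2) yX z(1), of k] by simp
      then show "z \<in> s" using s z by simp
    qed
    then show ?case using ye by (intro exI[of _ "{k}"] exI[of _ "e - \<rho> k (seq_diff y x)"]) auto
  qed
qed

lemma cont_D:
  assumes "continuous_map (FK_top X \<rho>) euclidean (f :: (nat \<Rightarrow> complex) \<Rightarrow> complex)" "y \<in> X" "\<epsilon> > 0"
  shows "\<exists>K \<delta>. finite K \<and> \<delta> > 0 \<and> (\<forall>z\<in>ballK K y \<delta>. cmod (f z - f y) < \<epsilon>)"
proof -
  have h: "\<And>U. openin euclidean U \<Longrightarrow> openin (FK_top X \<rho>) {x \<in> topspace (FK_top X \<rho>). f x \<in> U}"
    using assms(1) unfolding continuous_map_def by blast
  have "openin (FK_top X \<rho>) {x \<in> topspace (FK_top X \<rho>). f x \<in> ball (f y) \<epsilon>}"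
    by (rule h) simp
  moreover have "y \<in> {x \<in> topspace (FK_top X \<rho>). f x \<in> ball (f y) \<epsilon>}" using assms topspace_FK by simp
  ultimately obtain K e where Ke: "finite K" "e > 0" "ballK K y e \<subseteq> {x \<in> topspace (FK_top X \<rho>). f x \<in> ball (f y) \<epsilon>}"
    using open_char by blast
  have all: "\<forall>z\<in>ballK K y e. cmod (f z - f y) < \<epsilon>"
  proof
    fix z assume "z \<in> ballK K y e"
    then have "f z \<in> ball (f y) \<epsilon>" using Ke(3) by blast
    then have "dist (f y) (f z) < \<epsilon>" by simp
    then show "cmod (f z - f y) < \<epsilon>" by (metis dist_commute dist_norm)
  qed
  show ?thesis using Ke(1,2) all by blast
qed

lemma cont_I:
  assumes "\<And>y \<epsilon>. y \<in> X \<Longrightarrow> \<epsilon> > 0 \<Longrightarrow> \<exists>K \<delta>. finite K \<and> \<delta> > 0 \<and> (\<forall>z\<in>ballK K y \<delta>. cmod (f z - f y) < \<epsilon>)"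
  shows "continuous_map (FK_top X \<rho>) euclidean (f :: (nat \<Rightarrow> complex) \<Rightarrow> complex)"
  unfolding continuous_map_def
proof (intro conjI allI impI)
  show "f \<in> topspace (FK_top X \<rho>) \<rightarrow> topspace euclidean" by simp
next
  fix U :: "complex set" assume U: "openin euclidean U"
  show "openin (FK_top X \<rho>) {x \<in> topspace (FK_top X \<rho>). f x \<in> U}"
  proof (subst openin_subopen, intro ballI)
    fix y assume y: "y \<in> {x \<in> topspace (FK_top X \<rho>). f x \<in> U}"
    then have yX: "y \<in> X" "f y \<in> U" using topspace_FK by auto
    have "open U" using U by (simp only: open_openin)
    then obtain \<epsilon> where e: "\<epsilon> > 0" "ball (f y) \<epsilon> \<subseteq> U" using yX(2) open_contains_ball_eq by blast
    obtain K \<delta> where Kd: "finite K" "\<delta> > 0" "\<forall>z\<in>ballK K y \<delta>. cmod (f z - f y) < \<epsilon>"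
      using assms[OF yX(1) e(1)] by blast
    have "ballK K y \<delta> \<subseteq> {x \<in> topspace (FK_top X \<rho>). f x \<in> U}"
    proof
      fix z assume z: "z \<in> ballK K y \<delta>"
      then have "cmod (f z - f y) < \<epsilon>" using Kd(3) by blast
      then have "dist (f y) (f z) < \<epsilon>" by (metis dist_commute dist_norm)
      then have "f z \<in> ball (f y) \<epsilon>" by simp
      then have fzU: "f z \<in> U" using e(2) by blast
      have "z \<in> X" using z unfolding ballK_def by blast
      then show "z \<in> {x \<in> topspace (FK_top X \<rho>). f x \<in> U}" using fzU by (simp add: topspace_FK)
    qed
    then show "\<exists>T. openin (FK_top X \<rho>) T \<and> y \<in> T \<and> T \<subseteq> {x \<in> topspace (FK_top X \<rho>). f x \<in> U}"
      using open_ballK[OF yX(1) Kd(1,2)] in_ballK[OF yX(1) Kd(2)] by blast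
  qed
qed

lemma cont_lim:
  assumes "continuous_map (FK_top X \<rho>) euclidean (f :: (nat \<Rightarrow> complex) \<Rightarrow> complex)" "y \<in> X"
    "\<And>n. s n \<in> X" "\<And>k. (\<lambda>n. \<rho> k (seq_diff (s n) y)) \<longlonglongrightarrow> 0"
  shows "(\<lambda>n. f (s n)) \<longlonglongrightarrow> f y"
proof (rule tendstoI)
  fix \<epsilon> :: real assume e: "\<epsilon> > 0"
  obtain K \<delta> where Kd: "finite K" "\<delta> > 0" "\<forall>z\<in>ballK K y \<delta>. cmod (f z - f y) < \<epsilon>"
    using cont_D[OF assms(1,2) e] by blast
  have "\<forall>k\<in>K. eventually (\<lambda>n. \<rho> k (seq_diff (s n) y) < \<delta>) sequentially"
  proof
    fix k assume "k \<in> K"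
    show "eventually (\<lambda>n. \<rho> k (seq_diff (s n) y) < \<delta>) sequentially"
      by (rule order_tendstoD(2)[OF assms(4)[of k] Kd(2)])
  qed
  then have "eventually (\<lambda>n. \<forall>k\<in>K. \<rho> k (seq_diff (s n) y) < \<delta>) sequentially"
    using eventually_ball_finite[OF Kd(1), where P="\<lambda>n k. \<rho> k (seq_diff (s n) y) < \<delta>" and net=sequentially]
    by blast
  moreover have "dist (f (s n)) (f y) < \<epsilon>" if nn: "\<forall>k\<in>K. \<rho> k (seq_diff (s n) y) < \<delta>" for n
  proof -
    have "s n \<in> ballK K y \<delta>" using assms(3)[of n] nn unfolding ballK_def by simp
    then have "cmod (f (s n) - f y) < \<epsilon>" using Kd(3) by blast
    then show ?thesis by (simp add: dist_norm)
  qed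
  ultimately show "eventually (\<lambda>n. dist (f (s n)) (f y) < \<epsilon>) sequentially"
    by (rule eventually_mono)
qed

end

lemma FK_semis: assumes "is_FK X \<rho>" shows "semis X \<rho>"
proof (rule semis.intro)
  show "is_subspace_w X" using assms[unfolded is_FK_def] by (rule conjunct1)
  show "\<And>k. is_seminorm_on X (\<rho> k)" using conjunct1[OF conjunct2[OF assms[unfolded is_FK_def]]] by (rule spec)
qed

lemma FK_parts:
  assumes "is_FK X \<rho>"
  shows "is_subspace_w X" "\<And>k. is_seminorm_on X (\<rho> k)"
    "\<And>x. x \<in> X \<Longrightarrow> (\<And>k. \<rho> k x = 0) \<Longrightarrow> x = (\<lambda>j. 0)"
    "\<And>s :: nat \<Rightarrow> nat \<Rightarrow> complex. (\<forall>n. s n \<in> X) \<Longrightarrow> (\<forall>k. \<forall>e>0. \<exists>N. \<forall>m\<ge>N. \<forall>n\<ge>N. \<rho> k (seq_diff (s m) (s n)) < e)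
            \<Longrightarrow> (\<exists>x\<in>X. \<forall>k. (\<lambda>n. \<rho> k (seq_diff (s n) x)) \<longlonglongrightarrow> 0)"
    "\<And>j. continuous_map (FK_top X \<rho>) euclidean (\<lambda>x. x j)"
proof -
  note H = assms[unfolded is_FK_def]
  show "is_subspace_w X" using conjunct1[OF H] .
  show "\<And>k. is_seminorm_on X (\<rho> k)" using conjunct1[OF conjunct2[OF H]] by (rule spec)
  show "\<And>x. x \<in> X \<Longrightarrow> (\<And>k. \<rho> k x = 0) \<Longrightarrow> x = (\<lambda>j. 0)"
  proof -
    fix x assume "x \<in> X" "\<And>k. \<rho> k x = 0"
    then show "x = (\<lambda>j. 0)" using conjunct1[OF conjunct2[OF conjunct2[OF H]]] by blast
  qed
  show "\<And>s :: nat \<Rightarrow> nat \<Rightarrow> complex. (\<forall>n. s n \<in> X) \<Longrightarrow> (\<forall>k. \<forall>e>0. \<exists>N. \<forall>m\<ge>N. \<forall>n\<ge>N. \<rho> k (seq_diff (s m) (s n)) < e)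
            \<Longrightarrow> (\<exists>x\<in>X. \<forall>k. (\<lambda>n. \<rho> k (seq_diff (s n) x)) \<longlonglongrightarrow> 0)"
  proof -
    fix s :: "nat \<Rightarrow> nat \<Rightarrow> complex" assume a: "\<forall>n. s n \<in> X" "\<forall>k. \<forall>e>0. \<exists>N. \<forall>m\<ge>N. \<forall>n\<ge>N. \<rho> k (seq_diff (s m) (s n)) < e"
    have c: "\<forall>s. (\<forall>n. s n \<in> X) \<and> (\<forall>k. \<forall>e>0. \<exists>N. \<forall>m\<ge>N. \<forall>n\<ge>N. \<rho> k (seq_diff (s m) (s n)) < e)
            \<longrightarrow> (\<exists>x\<in>X. \<forall>k. (\<lambda>n. \<rho> k (seq_diff (s n) x)) \<longlonglongrightarrow> 0)"
      using conjunct1[OF conjunct2[OF conjunct2[OF conjunct2[OF H]]]] .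
    show "\<exists>x\<in>X. \<forall>k. (\<lambda>n. \<rho> k (seq_diff (s n) x)) \<longlonglongrightarrow> 0"
      using mp[OF spec[OF c, of s] conjI[OF a(1) a(2)]] .
  qed
  show "\<And>j. continuous_map (FK_top X \<rho>) euclidean (\<lambda>x. x j)"
    using conjunct2[OF conjunct2[OF conjunct2[OF conjunct2[OF H]]]] by (rule spec)
qed

lemma inter_enc: "inter_seminorms \<rho>Y (prod_encode (n, k)) = \<rho>Y n k"
  by (simp add: inter_seminorms_def)

lemma inter_FK:
  fixes Y :: "nat \<Rightarrow> (nat \<Rightarrow> complex) set" and \<rho>Y :: "nat \<Rightarrow> nat \<Rightarrow> (nat \<Rightarrow> complex) \<Rightarrow> real"
  assumes FKY: "\<And>n. is_FK (Y n) (\<rho>Y n)"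
  shows "is_FK (\<Inter>n. Y n) (inter_seminorms \<rho>Y)"
proof -
  define Z where "Z = (\<Inter>n. Y n)"
  define \<rho>Z where "\<rho>Z = inter_seminorms \<rho>Y"
  have SY: "\<And>n. semis (Y n) (\<rho>Y n)" using FKY FK_semis by blast
  have ZY: "\<And>n. Z \<subseteq> Y n" unfolding Z_def by blast
  have subZ: "is_subspace_w Z"
    unfolding is_subspace_w_def
  proof (intro conjI ballI allI)
    show "(\<lambda>j. 0) \<in> Z" unfolding Z_def using semis.zero_in[OF SY] by (rule INT_I)
  next
    fix x y assume "x \<in> Z" "y \<in> Z"
    then have xy: "\<And>n. x \<in> Y n" "\<And>n. y \<in> Y n" unfolding Z_def by auto
    have "seq_add x y \<in> Y n" for n using semis.add_in[OF SY[of n] xy(1)[of n] xy(2)[of n]] .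
    then show "seq_add x y \<in> Z" unfolding Z_def by (intro INT_I)
  next
    fix c x assume "x \<in> Z"
    then have xy: "\<And>n. x \<in> Y n" unfolding Z_def by auto
    have "seq_scale c x \<in> Y n" for n using semis.scale_in[OF SY[of n] xy[of n]] .
    then show "seq_scale c x \<in> Z" unfolding Z_def by (intro INT_I)
  qed
  have semZ: "\<And>m. is_seminorm_on Z (\<rho>Z m)"
  proof -
    fix m
    obtain a b where ab: "prod_decode m = (a, b)" by fastforce
    have r: "\<rho>Z m = \<rho>Y a b" unfolding \<rho>Z_def inter_seminorms_def ab by simp
    show "is_seminorm_on Z (\<rho>Z m)" unfolding r is_seminorm_on_def
      using semis.nn[OF SY[of a]] semis.tri[OF SY[of a]] semis.hom[OF SY[of a]] ZY[of a] by blast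
  qed
  have SZ: "semis Z \<rho>Z" using subZ semZ by (simp add: semis_def)
  have sepZ: "\<forall>x\<in>Z. (\<forall>k. \<rho>Z k x = 0) \<longrightarrow> x = (\<lambda>j. 0)"
  proof (intro ballI impI)
    fix x assume x: "x \<in> Z" "\<forall>k. \<rho>Z k x = 0"
    have "\<And>k. \<rho>Y 0 k x = 0" using x(2) inter_enc[of \<rho>Y 0] unfolding \<rho>Z_def by metis
    then show "x = (\<lambda>j. 0)" using FK_parts(3)[OF FKY[of 0]] x(1) ZY[of 0] by blast
  qed
  have compZ: "\<forall>s. (\<forall>n. s n \<in> Z) \<and> (\<forall>k. \<forall>e>0. \<exists>N. \<forall>m\<ge>N. \<forall>n\<ge>N. \<rho>Z k (seq_diff (s m) (s n)) < e)
            \<longrightarrow> (\<exists>x\<in>Z. \<forall>k. (\<lambda>n. \<rho>Z k (seq_diff (s n) x)) \<longlonglongrightarrow> 0)"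
  proof (intro allI impI)
    fix s :: "nat \<Rightarrow> nat \<Rightarrow> complex" assume a: "(\<forall>n. s n \<in> Z) \<and> (\<forall>k. \<forall>e>0. \<exists>N. \<forall>m\<ge>N. \<forall>n\<ge>N. \<rho>Z k (seq_diff (s m) (s n)) < e)"
    have sY: "\<And>n i. s i \<in> Y n" using a ZY by blast
    have "\<exists>y. y \<in> Y n \<and> (\<forall>k. (\<lambda>i. \<rho>Y n k (seq_diff (s i) y)) \<longlonglongrightarrow> 0)" for n
    proof -
      have "\<forall>k. \<forall>e>0. \<exists>N. \<forall>m\<ge>N. \<forall>i\<ge>N. \<rho>Y n k (seq_diff (s m) (s i)) < e"
      proof (intro allI impI)
        fix k and e :: real assume "e > 0"
        then obtain N where "\<forall>m\<ge>N. \<forall>i\<ge>N. \<rho>Z (prod_encode (n, k)) (seq_diff (s m) (s i)) < e"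
          using a by blast
        then show "\<exists>N. \<forall>m\<ge>N. \<forall>i\<ge>N. \<rho>Y n k (seq_diff (s m) (s i)) < e"
          unfolding \<rho>Z_def inter_enc by blast
      qed
      then show ?thesis using FK_parts(4)[OF FKY[of n], of s] sY by blast
    qed
    then obtain yf where yf: "\<And>n. yf n \<in> Y n" "\<And>n k. (\<lambda>i. \<rho>Y n k (seq_diff (s i) (yf n))) \<longlonglongrightarrow> 0"
      by metis
    have coord: "(\<lambda>i. s i j) \<longlonglongrightarrow> yf n j" for n j
      using semis.cont_lim[OF SY[of n] FK_parts(5)[OF FKY[of n], of j] yf(1)[of n] sY yf(2)[of n]] .
    have yeq: "yf n = yf 0" for n
    proof
      fix j show "yf n j = yf 0 j" using LIMSEQ_unique[OF coord[where n=n and j=j] coord[where n=0 and j=j]] .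
    qed
    have "yf 0 \<in> Y n" for n using yf(1)[of n] yeq[of n] by simp
    then have y0Z: "yf 0 \<in> Z" unfolding Z_def by (intro INT_I)
    have "\<forall>m. (\<lambda>i. \<rho>Z m (seq_diff (s i) (yf 0))) \<longlonglongrightarrow> 0"
    proof
      fix m
      obtain a b where ab: "prod_decode m = (a, b)" by fastforce
      have r: "\<rho>Z m = \<rho>Y a b" unfolding \<rho>Z_def inter_seminorms_def ab by simp
      show "(\<lambda>i. \<rho>Z m (seq_diff (s i) (yf 0))) \<longlonglongrightarrow> 0" unfolding r using yf(2)[of a b] yeq[of a] by simp
    qed
    then show "\<exists>x\<in>Z. \<forall>k. (\<lambda>n. \<rho>Z k (seq_diff (s n) x)) \<longlonglongrightarrow> 0" using y0Z by blast
  qed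
  have coordZ: "\<forall>j. continuous_map (FK_top Z \<rho>Z) euclidean (\<lambda>x. x j)"
  proof
    fix j
    show "continuous_map (FK_top Z \<rho>Z) euclidean (\<lambda>x. x j)"
    proof (rule semis.cont_I[OF SZ])
      fix y and \<epsilon> :: real assume y: "y \<in> Z" and e: "\<epsilon> > 0"
      obtain K \<delta> where Kd: "finite K" "\<delta> > 0" "\<forall>z\<in>semis.ballK (Y 0) (\<rho>Y 0) K y \<delta>. cmod (z j - y j) < \<epsilon>"
        using semis.cont_D[OF SY[of 0] FK_parts(5)[OF FKY[of 0], of j] _ e] y ZY[of 0] by blast
      have "\<forall>z\<in>semis.ballK Z \<rho>Z ((\<lambda>k. prod_encode (0, k)) ` K) y \<delta>. cmod (z j - y j) < \<epsilon>"
      proof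
        fix z assume z: "z \<in> semis.ballK Z \<rho>Z ((\<lambda>k. prod_encode (0, k)) ` K) y \<delta>"
        then have "z \<in> Z" "\<forall>k\<in>K. \<rho>Z (prod_encode (0, k)) (seq_diff z y) < \<delta>"
          unfolding semis.ballK_def[OF SZ] by auto
        then have "z \<in> semis.ballK (Y 0) (\<rho>Y 0) K y \<delta>"
          unfolding semis.ballK_def[OF SY[of 0]] \<rho>Z_def inter_enc using ZY[of 0] by blast
        then show "cmod (z j - y j) < \<epsilon>" using Kd(3) by blast
      qed
      then show "\<exists>K \<delta>. finite K \<and> \<delta> > 0 \<and> (\<forall>z\<in>semis.ballK Z \<rho>Z K y \<delta>. cmod (z j - y j) < \<epsilon>)"
        using Kd(1,2) by blast
    qed
  qed
  have "is_FK Z \<rho>Z"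
    unfolding is_FK_def using subZ semZ sepZ compZ coordZ by blast
  then show ?thesis unfolding Z_def \<rho>Z_def .
qed

lemma vadd_apply: "((v::vv) + w) n = seq_add (v n) (w n)"
  by (simp add: seq_add_def fun_eq_iff)
lemma vscale_apply: "(c *\<^sub>R (v::vv)) n = seq_scale (of_real c) (v n)"
  by (simp add: seq_scale_def fun_eq_iff scaleR_conv_of_real)
lemma cmul_apply: "cmul c v n = seq_scale c (v n)"
  by (simp add: cmul_def seq_scale_def)
lemma vzero_apply: "(0::vv) n = (\<lambda>j. 0)"
  by (simp add: fun_eq_iff)

lemma seq_add_plus: "seq_add x y = x + y"
  by (simp add: seq_add_def fun_eq_iff)
lemma seq_scale_R: "seq_scale (of_real c) x = c *\<^sub>R x"
  by (simp add: seq_scale_def fun_eq_iff scaleR_conv_of_real)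
lemma zero_seq: "(\<lambda>j. 0::complex) = 0"
  by (simp add: fun_eq_iff)

lemma dual_decomp:
  fixes Y :: "nat \<Rightarrow> (nat \<Rightarrow> complex) set" and \<rho>Y :: "nat \<Rightarrow> nat \<Rightarrow> (nat \<Rightarrow> complex) \<Rightarrow> real"
  assumes FKY: "\<And>n. is_FK (Y n) (\<rho>Y n)"
    and f: "f \<in> FK_dual (\<Inter>n. Y n) (inter_seminorms \<rho>Y)"
  shows "\<exists>N g. finite N \<and> (\<forall>n\<in>N. g n \<in> FK_dual (Y n) (\<rho>Y n)) \<and> (\<forall>z\<in>(\<Inter>n. Y n). f z = (\<Sum>n\<in>N. g n z))"
proof -
  define Z where "Z = (\<Inter>n. Y n)"
  define \<rho>Z where "\<rho>Z = inter_seminorms \<rho>Y"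
  have SY: "\<And>n. semis (Y n) (\<rho>Y n)" using FKY FK_semis by blast
  have SZ: "semis Z \<rho>Z" unfolding Z_def \<rho>Z_def by (rule FK_semis[OF inter_FK[OF FKY]])
  have ZY: "\<And>n. Z \<subseteq> Y n" unfolding Z_def by blast
  have fadd: "\<And>x y. x \<in> Z \<Longrightarrow> y \<in> Z \<Longrightarrow> f (seq_add x y) = f x + f y"
    using f unfolding FK_dual_def Z_def by blast
  have fsc: "\<And>c x. x \<in> Z \<Longrightarrow> f (seq_scale c x) = c * f x"
    using f unfolding FK_dual_def Z_def by blast
  have fcont: "continuous_map (FK_top Z \<rho>Z) euclidean f"
    using f unfolding FK_dual_def Z_def \<rho>Z_def by blast
  have z0: "(\<lambda>j. 0) \<in> Z" using semis.zero_in[OF SZ] .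
  have f0: "f (\<lambda>j. 0) = 0"
  proof -
    have "(\<lambda>j. 0::complex) = seq_scale 0 (\<lambda>j. 0)" by (simp add: seq_scale_def)
    then show ?thesis using fsc[OF z0, of 0] by simp
  qed
  obtain K \<delta> where Kd: "finite K" "\<delta> > 0"
    "\<forall>z\<in>semis.ballK Z \<rho>Z K (\<lambda>j. 0) \<delta>. cmod (f z - f (\<lambda>j. 0)) < 1"
    using semis.cont_D[OF SZ fcont z0, of 1] by auto
  have sd0: "seq_diff z (\<lambda>j. 0) = z" for z by (simp add: seq_diff_def)
  have small: "cmod (f z) < 1" if "z \<in> Z" "\<forall>m\<in>K. \<rho>Z m z < \<delta>" for z
  proof -
    have "z \<in> semis.ballK Z \<rho>Z K (\<lambda>j. 0) \<delta>" unfolding semis.ballK_def[OF SZ] sd0 using that by blast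
    then show ?thesis using Kd(3) f0 by fastforce
  qed
  define C where "C = 2 / \<delta>"
  have C0: "C \<ge> 0" using Kd(2) by (simp add: C_def)
  have bound: "cmod (f z) \<le> C * (\<Sum>m\<in>K. \<rho>Z m z)" if z: "z \<in> Z" for z
  proof -
    define S where "S = (\<Sum>m\<in>K. \<rho>Z m z)"
    have S0: "S \<ge> 0" unfolding S_def using semis.nn[OF SZ z] by (simp add: sum_nonneg)
    have le: "\<rho>Z m z \<le> S" if "m \<in> K" for m
      unfolding S_def using that Kd(1) semis.nn[OF SZ z] by (intro member_le_sum) auto
    have key: "t * cmod (f z) < 1" if t: "t > 0" "t * S < \<delta>" for t
    proof -
      have wZ: "seq_scale (of_real t) z \<in> Z" using semis.scale_in[OF SZ z] .
      have "\<forall>m\<in>K. \<rho>Z m (seq_scale (of_real t) z) < \<delta>"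
      proof
        fix m assume m: "m \<in> K"
        have "\<rho>Z m (seq_scale (of_real t) z) = t * \<rho>Z m z" using semis.hom[OF SZ z] t by simp
        also have "\<dots> \<le> t * S" using le[OF m] t by (simp add: mult_left_mono)
        finally show "\<rho>Z m (seq_scale (of_real t) z) < \<delta>" using t by simp
      qed
      then have "cmod (f (seq_scale (of_real t) z)) < 1" using small wZ by blast
      then show ?thesis using fsc[OF z] t by (simp add: norm_mult)
    qed
    show ?thesis
    proof (cases "S = 0")
      case True
      have "cmod (f z) = 0"
      proof (rule ccontr)
        assume "cmod (f z) \<noteq> 0"
        then have pos: "cmod (f z) > 0" by simp
        have "(1 / cmod (f z)) * cmod (f z) < 1" using key[of "1 / cmod (f z)"] pos True Kd(2) by simp
        then show False using pos by simp
      qed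
      then show ?thesis using True S_def by simp
    next
      case False
      then have Sp: "S > 0" using S0 by simp
      have "(\<delta> / (2 * S)) * cmod (f z) < 1"
        using key[of "\<delta> / (2 * S)"] Sp Kd(2) by simp
      then have "\<delta> * cmod (f z) < 2 * S" using Sp by (simp add: field_simps)
      then have "cmod (f z) < (2 / \<delta>) * S" using Kd(2) by (simp add: field_simps)
      then show ?thesis unfolding C_def S_def by simp
    qed
  qed
  define a where "a m = fst (prod_decode m)" for m
  define b where "b m = snd (prod_decode m)" for m
  have rhoZ: "\<rho>Z m = \<rho>Y (a m) (b m)" for m unfolding \<rho>Z_def inter_seminorms_def a_def b_def by simp
  define W :: "vv set" where "W = {v. \<forall>n. v n \<in> Y n}"
  define p :: "vv \<Rightarrow> real" where "p v = C * (\<Sum>m\<in>K. \<rho>Y (a m) (b m) (v (a m)))" for v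
  have Y0: "\<And>n. 0 \<in> Y n" using semis.zero_in[OF SY] by (simp add: zero_seq)
  have Yadd: "\<And>n x y. x \<in> Y n \<Longrightarrow> y \<in> Y n \<Longrightarrow> x + y \<in> Y n"
    using semis.add_in[OF SY] by (simp add: seq_add_plus)
  have Yscale: "\<And>n c x. x \<in> Y n \<Longrightarrow> c *\<^sub>R x \<in> Y n"
  proof -
    fix n c x assume "x \<in> Y n"
    then have "seq_scale (of_real c) x \<in> Y n" using semis.scale_in[OF SY] by blast
    then show "c *\<^sub>R x \<in> Y n" by (simp add: seq_scale_R)
  qed
  have W: "rsub W" unfolding rsub_def W_def
    using Y0 Yadd Yscale by simp
  have Wc: "\<forall>c. \<forall>x\<in>W. cmul c x \<in> W" unfolding W_def
    using semis.scale_in[OF SY] by (simp add: cmul_apply)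
  have pW: "sublin W p" unfolding sublin_def
  proof (intro conjI ballI allI impI)
    fix x y assume "x \<in> W" "y \<in> W"
    then have xy: "\<And>n. x n \<in> Y n" "\<And>n. y n \<in> Y n" unfolding W_def by auto
    have "(\<Sum>m\<in>K. \<rho>Y (a m) (b m) ((x + y) (a m))) \<le> (\<Sum>m\<in>K. \<rho>Y (a m) (b m) (x (a m)) + \<rho>Y (a m) (b m) (y (a m)))"
      unfolding vadd_apply by (intro sum_mono semis.tri[OF SY xy(1) xy(2)])
    then show "p (x + y) \<le> p x + p y" unfolding p_def using C0
      by (simp add: sum.distrib distrib_left[symmetric] mult_left_mono)
  next
    fix c :: real and x assume c: "c \<ge> 0" and "x \<in> W"
    then have xy: "\<And>n. x n \<in> Y n" unfolding W_def by auto
    have "(\<Sum>m\<in>K. \<rho>Y (a m) (b m) ((c *\<^sub>R x) (a m))) = c * (\<Sum>m\<in>K. \<rho>Y (a m) (b m) (x (a m)))"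
      unfolding vscale_apply using semis.hom[OF SY xy] c by (simp add: sum_distrib_left)
    then show "p (c *\<^sub>R x) = c * p x" unfolding p_def by simp
  qed
  have pc: "\<forall>c. \<forall>x\<in>W. p (cmul c x) = cmod c * p x"
  proof (intro allI ballI)
    fix c x assume "x \<in> W"
    then have xy: "\<And>n. x n \<in> Y n" unfolding W_def by auto
    have "(\<Sum>m\<in>K. \<rho>Y (a m) (b m) ((cmul c x) (a m))) = cmod c * (\<Sum>m\<in>K. \<rho>Y (a m) (b m) (x (a m)))"
      unfolding cmul_apply using semis.hom[OF SY xy] by (simp add: sum_distrib_left)
    then show "p (cmul c x) = cmod c * p x" unfolding p_def by simp
  qed
  define S :: "vv set" where "S = (\<lambda>z. (\<lambda>n. z)) ` Z"
  have S: "rsub S" unfolding rsub_def S_def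
  proof (intro conjI ballI allI)
    show "(0::vv) \<in> (\<lambda>z. \<lambda>n. z) ` Z" using z0 by (force simp: fun_eq_iff)
  next
    fix x y :: vv assume "x \<in> (\<lambda>z. \<lambda>n. z) ` Z" "y \<in> (\<lambda>z. \<lambda>n. z) ` Z"
    then obtain u v where uv: "u \<in> Z" "v \<in> Z" "x = (\<lambda>n. u)" "y = (\<lambda>n. v)" by blast
    have "x + y = (\<lambda>n. seq_add u v)" using uv by (simp add: fun_eq_iff seq_add_def)
    then show "x + y \<in> (\<lambda>z. \<lambda>n. z) ` Z" using semis.add_in[OF SZ uv(1,2)] by blast
  next
    fix c and x :: vv assume "x \<in> (\<lambda>z. \<lambda>n. z) ` Z"
    then obtain u where uv: "u \<in> Z" "x = (\<lambda>n. u)" by blast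
    have "c *\<^sub>R x = (\<lambda>n. seq_scale (of_real c) u)" using uv by (simp add: fun_eq_iff seq_scale_def scaleR_conv_of_real)
    then show "c *\<^sub>R x \<in> (\<lambda>z. \<lambda>n. z) ` Z" using semis.scale_in[OF SZ uv(1)] by blast
  qed
  have Sc: "\<forall>c. \<forall>x\<in>S. cmul c x \<in> S"
  proof (intro allI ballI)
    fix c x assume "x \<in> S"
    then obtain u where uv: "u \<in> Z" "x = (\<lambda>n. u)" unfolding S_def by blast
    have "cmul c x = (\<lambda>n. seq_scale c u)" using uv by (simp add: fun_eq_iff seq_scale_def cmul_def)
    then show "cmul c x \<in> S" unfolding S_def using semis.scale_in[OF SZ uv(1)] by blast
  qed
  have SW: "S \<subseteq> W" unfolding S_def W_def using ZY by blast
  define f' where "f' v = f (v 0)" for v :: vv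
  have f'add: "\<forall>x\<in>S. \<forall>y\<in>S. f' (x + y) = f' x + f' y"
    unfolding S_def f'_def using fadd by (auto simp: seq_add_plus)
  have f'sc: "\<forall>c. \<forall>x\<in>S. f' (cmul c x) = c * f' x"
    unfolding S_def f'_def using fsc by (auto simp: cmul_def seq_scale_def)
  have f'p: "\<forall>x\<in>S. cmod (f' x) \<le> p x"
  proof
    fix x assume "x \<in> S"
    then obtain u where uv: "u \<in> Z" "x = (\<lambda>n. u)" unfolding S_def by blast
    show "cmod (f' x) \<le> p x" unfolding f'_def p_def uv using bound[OF uv(1)] by (simp add: rhoZ)
  qed
  obtain F where F: "\<forall>x\<in>W. \<forall>y\<in>W. F (x + y) = F x + F y" "\<forall>c. \<forall>x\<in>W. F (cmul c x) = c * F x"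
    "\<forall>x\<in>S. F x = f' x" "\<forall>x\<in>W. cmod (F x) \<le> p x"
    using complex_hb[OF W S SW Wc Sc f'add f'sc pW pc f'p] by blast
  define e :: "nat \<Rightarrow> (nat \<Rightarrow> complex) \<Rightarrow> vv" where "e n y = (\<lambda>k. if k = n then y else (\<lambda>j. 0))" for n y
  have eW: "y \<in> Y n \<Longrightarrow> e n y \<in> W" for n y unfolding e_def W_def using semis.zero_in[OF SY] by auto
  define g where "g n y = F (e n y)" for n y
  have gdual: "g n \<in> FK_dual (Y n) (\<rho>Y n)" for n
  proof -
    have gadd: "g n (seq_add x y) = g n x + g n y" if "x \<in> Y n" "y \<in> Y n" for x y
    proof -
      have "e n (seq_add x y) = e n x + e n y" by (auto simp: e_def fun_eq_iff seq_add_def)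
      then show ?thesis unfolding g_def using F(1) eW that by simp
    qed
    have gsc: "g n (seq_scale c x) = c * g n x" if "x \<in> Y n" for c x
    proof -
      have "e n (seq_scale c x) = cmul c (e n x)" by (auto simp: e_def fun_eq_iff seq_scale_def cmul_def)
      then show ?thesis unfolding g_def using F(2) eW that by simp
    qed
    have gb: "cmod (g n w) \<le> C * card K * d" if w: "w \<in> Y n" "\<forall>k\<in>b ` {m\<in>K. a m = n}. \<rho>Y n k w < d" "d \<ge> 0" for w d
    proof -
      have "cmod (g n w) \<le> p (e n w)" unfolding g_def using F(4) eW[OF w(1)] by blast
      also have "(\<Sum>m\<in>K. \<rho>Y (a m) (b m) (e n w (a m))) \<le> (\<Sum>m\<in>K. d)"
      proof (rule sum_mono)
        fix m assume m: "m \<in> K"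
        show "\<rho>Y (a m) (b m) (e n w (a m)) \<le> d"
        proof (cases "a m = n")
          case True
          then have "b m \<in> b ` {m\<in>K. a m = n}" using m by blast
          then show ?thesis using True w(2) unfolding e_def by fastforce
        next
          case False
          then show ?thesis unfolding e_def using semis.rho_zero[OF SY] w(3) by simp
        qed
      qed
      then have "p (e n w) \<le> C * (card K * d)" unfolding p_def using C0 by (simp add: mult_left_mono)
      finally show ?thesis by (simp add: mult.assoc)
    qed
    have gcont: "continuous_map (FK_top (Y n) (\<rho>Y n)) euclidean (g n)"
    proof (rule semis.cont_I[OF SY])
      fix y and \<epsilon> :: real assume y: "y \<in> Y n" and e: "\<epsilon> > 0"
      define d where "d = \<epsilon> / (C * card K + 1)"
      have dpos: "d > 0" unfolding d_def using e C0 by (simp add: add_nonneg_pos)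
      have Cd: "C * card K * d < \<epsilon>"
      proof -
        have "C * card K * d = \<epsilon> * ((C * card K) / (C * card K + 1))" unfolding d_def
          using C0 by (simp add: field_simps)
        also have "\<dots> < \<epsilon> * 1"
        proof (rule mult_strict_left_mono[OF _ e])
          have cp: "0 \<le> C * real (card K)" using C0 by simp
          then have "0 < C * real (card K) + 1" by simp
          then show "C * real (card K) / (C * real (card K) + 1) < 1"
            by (subst divide_less_eq_1_pos) auto
        qed
        finally show ?thesis by simp
      qed
      have "\<forall>z\<in>semis.ballK (Y n) (\<rho>Y n) (b ` {m\<in>K. a m = n}) y d. cmod (g n z - g n y) < \<epsilon>"
      proof
        fix z assume "z \<in> semis.ballK (Y n) (\<rho>Y n) (b ` {m\<in>K. a m = n}) y d"
        then have z: "z \<in> Y n" "\<forall>k\<in>b ` {m\<in>K. a m = n}. \<rho>Y n k (seq_diff z y) < d"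
          unfolding semis.ballK_def[OF SY] by auto
        have dz: "seq_diff z y \<in> Y n" using semis.diff_in[OF SY z(1) y] .
        have "seq_diff z y = seq_add z (seq_scale (-1) y)" by (simp add: seq_diff_def seq_add_def seq_scale_def fun_eq_iff)
        then have "g n (seq_diff z y) = g n z - g n y"
          using gadd[OF z(1) semis.scale_in[OF SY y]] gsc[OF y] by simp
        then have "cmod (g n z - g n y) \<le> C * card K * d" using gb[OF dz z(2)] dpos by simp
        then show "cmod (g n z - g n y) < \<epsilon>" using Cd by simp
      qed
      moreover have "finite (b ` {m\<in>K. a m = n})" using Kd(1) by simp
      ultimately show "\<exists>K \<delta>. finite K \<and> \<delta> > 0 \<and> (\<forall>z\<in>semis.ballK (Y n) (\<rho>Y n) K y \<delta>. cmod (g n z - g n y) < \<epsilon>)"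
        using dpos by blast
    qed
    show ?thesis unfolding FK_dual_def using gadd gsc gcont by blast
  qed
  define N where "N = a ` K"
  have fin: "finite N" unfolding N_def using Kd(1) by simp
  have decomp: "f z = (\<Sum>n\<in>N. g n z)" if z: "z \<in> Z" for z
  proof -
    have zY: "\<And>n. z \<in> Y n" using z ZY by blast
    define v :: "nat set \<Rightarrow> vv" where "v M = (\<lambda>k. if k \<in> M then z else (\<lambda>j. 0))" for M
    have vW: "v M \<in> W" for M unfolding v_def W_def using zY semis.zero_in[OF SY] by auto
    have F0: "F 0 = 0"
    proof -
      have "cmul 0 0 = (0::vv)" by (simp add: cmul_def fun_eq_iff)
      moreover have "F (cmul 0 0) = 0 * F 0" using F(2) rsub_zero[OF W] by blast
      ultimately show ?thesis by simp
    qed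
    have ind: "F (v M) = (\<Sum>n\<in>M. g n z)" if "finite M" for M
      using that
    proof (induction M rule: finite_induct)
      case empty
      have v0: "v {} = 0" unfolding v_def by (simp add: fun_eq_iff)
      show ?case by (simp only: v0 F0 sum.empty)
    next
      case (insert n M)
      have "v (insert n M) = v M + e n z" using insert(2) unfolding v_def e_def by (auto simp: fun_eq_iff)
      then have "F (v (insert n M)) = F (v M) + g n z" unfolding g_def using F(1) vW eW zY by simp
      then show ?case using insert by simp
    qed
    define r :: vv where "r = (\<lambda>k. if k \<in> N then (\<lambda>j. 0) else z)"
    have rW: "r \<in> W" unfolding r_def W_def using zY semis.zero_in[OF SY] by auto
    have "p r = 0" unfolding p_def r_def N_def using semis.rho_zero[OF SY] by simp
    then have Fr: "F r = 0" using F(4) rW by fastforce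
    have "(\<lambda>n. z) = v N + r" unfolding v_def r_def by (auto simp: fun_eq_iff)
    then have "F (\<lambda>n. z) = F (v N) + F r" using F(1) vW rW by simp
    moreover have "F (\<lambda>n. z) = f z" using F(3) z unfolding S_def f'_def by auto
    ultimately show ?thesis using ind[OF fin] Fr by simp
  qed
  show ?thesis using fin gdual decomp unfolding Z_def by blast
qed

lemma Tdc_phi: "Tdc p q n x \<in> phi"
proof -
  have "{j. Tdc p q n x j \<noteq> 0} \<subseteq> {..<q n}"
  proof
    fix j assume j: "j \<in> {j. Tdc p q n x j \<noteq> 0}"
    show "j \<in> {..<q n}"
    proof (rule ccontr)
      assume "j \<notin> {..<q n}"
      then have "\<forall>k\<in>{p n<..q n}. sect x k j = 0" by (auto simp: sect_def)
      then have "Tdc p q n x j = 0" unfolding Tdc_def by simp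
      then show False using j by simp
    qed
  qed
  then show ?thesis unfolding phi_def using finite_subset by blast
qed

theorem mainTheorem4:
  fixes p q :: "nat \<Rightarrow> nat"
    and X :: "(nat \<Rightarrow> complex) set" and \<rho>X :: "nat \<Rightarrow> (nat \<Rightarrow> complex) \<Rightarrow> real"
    and Y :: "nat \<Rightarrow> (nat \<Rightarrow> complex) set" and \<rho>Y :: "nat \<Rightarrow> nat \<Rightarrow> (nat \<Rightarrow> complex) \<Rightarrow> real"
  assumes "\<And>n. p n < q n"
    and "filterlim q at_top sequentially"
    and "is_FK X \<rho>X"
    and "phi \<subseteq> X"
    and "\<And>n. is_FK (Y n) (\<rho>Y n)"
    and "\<And>n. dc_conull p q X \<rho>X (Y n) (\<rho>Y n)"
  shows "dc_conull p q X \<rho>X (\<Inter>n. Y n) (inter_seminorms \<rho>Y)"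
proof -
  have FKY: "\<And>n. is_FK (Y n) (\<rho>Y n)" by fact
  have XY: "\<And>n. X \<subseteq> Y n" using assms(6) unfolding dc_conull_def by blast
  have DBY: "\<And>n. DB p q X \<rho>X \<subseteq> DW p q (Y n) (\<rho>Y n)" using assms(6) unfolding dc_conull_def by blast
  have ne: "DW p q X \<rho>X \<noteq> DB p q X \<rho>X" using assms(6)[of 0] unfolding dc_conull_def by blast
  have XZ: "X \<subseteq> (\<Inter>n. Y n)" using XY by blast
  have FKZ: "is_FK (\<Inter>n. Y n) (inter_seminorms \<rho>Y)" using inter_FK[OF FKY] .
  have "DB p q X \<rho>X \<subseteq> DW p q (\<Inter>n. Y n) (inter_seminorms \<rho>Y)"
  proof
    fix x assume x: "x \<in> DB p q X \<rho>X"
    have xW: "\<And>n. x \<in> DW p q (Y n) (\<rho>Y n)" using DBY x by blast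
    have xYn: "\<And>n. x \<in> Y n" using xW unfolding DW_def by blast
    have xZ: "x \<in> (\<Inter>n. Y n)" using xYn by blast
    have TZ: "\<And>k. Tdc p q k x \<in> (\<Inter>n. Y n)" using Tdc_phi assms(4) XZ by blast
    have "\<forall>f\<in>FK_dual (\<Inter>n. Y n) (inter_seminorms \<rho>Y). (\<lambda>k. f (Tdc p q k x)) \<longlonglongrightarrow> f x"
    proof
      fix f assume f: "f \<in> FK_dual (\<Inter>n. Y n) (inter_seminorms \<rho>Y)"
      obtain N g where Ng: "finite N" "\<forall>n\<in>N. g n \<in> FK_dual (Y n) (\<rho>Y n)"
        "\<forall>z\<in>(\<Inter>n. Y n). f z = (\<Sum>n\<in>N. g n z)"
        using dual_decomp[OF FKY f] by blast
      have lim: "(\<lambda>k. g n (Tdc p q k x)) \<longlonglongrightarrow> g n x" if "n \<in> N" for n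
        using xW[of n] Ng(2) that unfolding DW_def by blast
      have "(\<lambda>k. \<Sum>n\<in>N. g n (Tdc p q k x)) \<longlonglongrightarrow> (\<Sum>n\<in>N. g n x)"
        by (rule tendsto_sum) (rule lim)
      moreover have "(\<lambda>k. f (Tdc p q k x)) = (\<lambda>k. \<Sum>n\<in>N. g n (Tdc p q k x))"
        using Ng(3) TZ by simp
      moreover have "f x = (\<Sum>n\<in>N. g n x)" using Ng(3) xZ by simp
      ultimately show "(\<lambda>k. f (Tdc p q k x)) \<longlonglongrightarrow> f x" by simp
    qed
    then show "x \<in> DW p q (\<Inter>n. Y n) (inter_seminorms \<rho>Y)" unfolding DW_def using xZ by blast
  qed
  then show ?thesis unfolding dc_conull_def using assms(3) FKZ XZ ne by blast
qed

end
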